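(* The elements $y_1+y_2+x_3$ and $y_1+y_2+y_3$ are perfect in $D^{2,2,2}$.
   Context: $D^{2,2,2}$ is the modular lattice generated by $x_1,y_1,x_2,y_2,x_3,y_3$ subject only to $x_i\subseteq y_i$ ($i=1,2,3$), with a greatest element $I$ adjoined. Join is written $a+b$. A representation $\rho$ of $D^{2,2,2}$ in a finite-dimensional vector space $X$ is a lattice morphism from $D^{2,2,2}$ to the subspace lattice of $X$, with $\rho(I)=X$. It is indecomposable if $X\neq0$ and there is no decomposition $X=X'\oplus X''$ with $X',X''\neq0$ and $\rho(a)=(\rho(a)\cap X')+(\rho(a)\cap X'')$ for all $a$. An element $a$ is perfect if $\rho(a)\in\{0,X\}$ for every indecomposable representation $\rho$ in a space $X$. *)

theory Defs
  imports "HOL-Analysis.Analysis"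
begin

datatype idx = I1 | I2 | I3

text \<open>Lattice terms over the generators x_i, y_i of D^{2,2,2} and the adjoined top I.
  Every element of D^{2,2,2} is the value of such a term.\<close>
datatype lterm = Gx idx | Gy idx | Join lterm lterm | Meet lterm lterm | Top

definition ssum :: "('k::field ^ 'n) set \<Rightarrow> ('k ^ 'n) set \<Rightarrow> ('k ^ 'n) set" where
  "ssum A B = {u + v | u v. u \<in> A \<and> v \<in> B}"

text \<open>A representation of D^{2,2,2} in X = k^n is determined by the images of the
  generators: subspaces rx i \<subseteq> ry i.  (D^{2,2,2} is free modular on these generators
  subject to x_i \<subseteq> y_i, so these are exactly the lattice morphisms with I \<mapsto> X.)\<close>
definition is_rep :: "(idx \<Rightarrow> ('k::field ^ 'n::finite) set) \<Rightarrow> (idx \<Rightarrow> ('k ^ 'n) set) \<Rightarrow> bool" where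
  "is_rep rx ry \<longleftrightarrow> (\<forall>i. vec.subspace (rx i) \<and> vec.subspace (ry i) \<and> rx i \<subseteq> ry i)"

fun reval :: "(idx \<Rightarrow> ('k::field ^ 'n::finite) set) \<Rightarrow> (idx \<Rightarrow> ('k ^ 'n) set) \<Rightarrow> lterm \<Rightarrow> ('k ^ 'n) set" where
  "reval rx ry (Gx i) = rx i"
| "reval rx ry (Gy i) = ry i"
| "reval rx ry (Join a b) = ssum (reval rx ry a) (reval rx ry b)"
| "reval rx ry (Meet a b) = reval rx ry a \<inter> reval rx ry b"
| "reval rx ry Top = UNIV"

definition indecomposable :: "(idx \<Rightarrow> ('k::field ^ 'n::finite) set) \<Rightarrow> (idx \<Rightarrow> ('k ^ 'n) set) \<Rightarrow> bool" where
  "indecomposable rx ry \<longleftrightarrow> is_rep rx ry \<and> (UNIV :: ('k ^ 'n) set) \<noteq> {0} \<and>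
     \<not> (\<exists>X1 X2. vec.subspace X1 \<and> vec.subspace X2 \<and> X1 \<noteq> {0} \<and> X2 \<noteq> {0} \<and>
          X1 \<inter> X2 = {0} \<and> ssum X1 X2 = UNIV \<and>
          (\<forall>a. reval rx ry a = ssum (reval rx ry a \<inter> X1) (reval rx ry a \<inter> X2)))"

definition perfect :: "'k::field itself \<Rightarrow> 'n::finite itself \<Rightarrow> lterm \<Rightarrow> bool" where
  "perfect _ _ a \<longleftrightarrow> (\<forall>(rx :: idx \<Rightarrow> ('k ^ 'n) set) ry. indecomposable rx ry \<longrightarrow>
      reval rx ry a = {0} \<or> reval rx ry a = UNIV)"

end

theory Submission
  imports Defs
begin
lemma span_disj:
  fixes A B :: "('k::field ^ 'n::finite) set"
  assumes ind: "vec.independent (A \<union> B)" and dj: "A \<inter> B = {}"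
  shows "vec.span A \<inter> vec.span B = {0}"
proof -
  have fin: "finite (A \<union> B)" using vec.independent_bound_general[OF ind] by blast
  have iA: "vec.independent A" and iB: "vec.independent B"
    using ind vec.independent_mono by blast+
  have dA: "vec.dim (vec.span A) = card A" using iA by (simp add: vec.dim_eq_card_independent)
  have dB: "vec.dim (vec.span B) = card B" using iB by (simp add: vec.dim_eq_card_independent)
  have "vec.dim {x + y |x y. x \<in> vec.span A \<and> y \<in> vec.span B} = vec.dim (vec.span (A \<union> B))"
      by (simp only: vec.span_Un)
    also have "\<dots> = card (A \<union> B)" using ind by (simp add: vec.dim_eq_card_independent)
    also have "\<dots> = card A + card B" using fin dj by (simp add: card_Un_disjoint)
    finally have dAB: "vec.dim {x + y |x y. x \<in> vec.span A \<and> y \<in> vec.span B} = card A + card B" .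
  have e: "vec.dim {x + y |x y. x \<in> vec.span A \<and> y \<in> vec.span B} + vec.dim (vec.span A \<inter> vec.span B) = vec.dim (vec.span A) + vec.dim (vec.span B)"
    by (rule vec.dim_sums_Int) (rule vec.subspace_span)+
  have "vec.dim (vec.span A \<inter> vec.span B) = 0"
    using e dA dB dAB by linarith
  then have "vec.span A \<inter> vec.span B \<subseteq> {0}" by (subst vec.dim_eq_0[symmetric])
  moreover have "0 \<in> vec.span A \<inter> vec.span B" by (rule IntI; rule vec.span_zero)
  ultimately show ?thesis by blast
qed

lemma compl_exists:
  fixes S G :: "('k::field ^ 'n::finite) set"
  assumes sS: "vec.subspace S" and sG: "vec.subspace G" and ne: "S \<noteq> UNIV"
  shows "\<exists>X2. vec.subspace X2 \<and> X2 \<noteq> {0} \<and> S \<inter> X2 = {0} \<and> ssum S X2 = UNIV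
           \<and> G \<subseteq> ssum (G \<inter> S) (G \<inter> X2)"
proof -
  obtain B1 where B1: "B1 \<subseteq> S" "vec.independent B1" "S \<subseteq> vec.span B1"
    by (rule vec.basis_exists)
  have "vec.span B1 \<subseteq> S" using B1(1) sS by (rule vec.span_minimal)
  then have SB1: "S = vec.span B1" using B1(3) by (rule subset_antisym[rotated])
  obtain B2 where B2: "B1 \<subseteq> B2" "B2 \<subseteq> B1 \<union> G" "vec.independent B2" "B1 \<union> G \<subseteq> vec.span B2"
    by (rule vec.maximal_independent_subset_extend[of B1 "B1 \<union> G"]) (simp, rule B1(2))
  obtain B3 where B3: "B2 \<subseteq> B3" "vec.independent B3" "UNIV \<subseteq> vec.span B3"
    by (rule vec.maximal_independent_subset_extend[of B2 UNIV]) (simp, rule B2(3))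
  define X2 where "X2 = vec.span (B3 - B1)"
  have un3: "B1 \<union> (B3 - B1) = B3" using B2(1) B3(1) by auto
  have i3: "vec.independent (B1 \<union> (B3 - B1))" using B3(2) un3 by simp
  have disj: "S \<inter> X2 = {0}" unfolding X2_def SB1
    by (rule span_disj[OF i3]) auto
  have sp3: "vec.span B3 = UNIV" using B3(3) by auto
  have sum: "ssum S X2 = UNIV" unfolding X2_def SB1 ssum_def
    using vec.span_Un[of B1 "B3 - B1"] un3 sp3 by simp
  have nz: "X2 \<noteq> {0}"
  proof
    assume "X2 = {0}"
    then have "ssum S X2 = S" unfolding ssum_def by auto
    with sum ne show False by simp
  qed
  have G: "G \<subseteq> ssum (G \<inter> S) (G \<inter> X2)"
  proof
    fix v assume v: "v \<in> G"
    have un2: "B1 \<union> (B2 - B1) = B2" using B2(1) by auto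
    have "v \<in> vec.span B2" using B2(4) v by auto
    then have "v \<in> vec.span (B1 \<union> (B2 - B1))" using un2 by simp
    then obtain s c where sc: "v = s + c" "s \<in> vec.span B1" "c \<in> vec.span (B2 - B1)"
      unfolding vec.span_Un by auto
    have "B2 - B1 \<subseteq> G" using B2(2) by auto
    then have "vec.span (B2 - B1) \<subseteq> G" using sG by (rule vec.span_minimal)
    then have cG: "c \<in> G" using sc(3) by auto
    have "vec.span (B2 - B1) \<subseteq> vec.span (B3 - B1)" by (rule vec.span_mono) (use B3(1) in auto)
    then have cX: "c \<in> X2" unfolding X2_def using sc(3) by auto
    have "s = v - c" using sc by simp
    then have sG': "s \<in> G" using vec.subspace_diff[OF sG v cG] by simp
    have sS': "s \<in> S" using sc(2) SB1 by simp
    show "v \<in> ssum (G \<inter> S) (G \<inter> X2)" unfolding ssum_def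
      using sc(1) sG' sS' cG cX by auto
  qed
  have "vec.subspace X2" unfolding X2_def by (rule vec.subspace_span)
  then show ?thesis using disj sum nz G by auto
qed

lemma ssum_left: "0 \<in> B \<Longrightarrow> A \<subseteq> ssum A B"
  unfolding ssum_def by force

lemma ssum_right: "0 \<in> A \<Longrightarrow> B \<subseteq> ssum A B"
  unfolding ssum_def by force

lemma ssum_span:
  fixes A B :: "('k::field ^ 'n::finite) set"
  assumes "vec.subspace A" "vec.subspace B"
  shows "ssum A B = vec.span (A \<union> B)"
proof -
  have "vec.span A = A" using assms(1) by (rule vec.span_eq_iff[THEN iffD2])
  moreover have "vec.span B = B" using assms(2) by (rule vec.span_eq_iff[THEN iffD2])
  ultimately show ?thesis unfolding vec.span_Un by (simp only: ssum_def)
qed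

lemma ssum_subspace:
  fixes A B :: "('k::field ^ 'n::finite) set"
  assumes "vec.subspace A" "vec.subspace B"
  shows "vec.subspace (ssum A B)"
  unfolding ssum_span[OF assms] by (rule vec.subspace_span)

lemma ssum_le:
  fixes A B C :: "('k::field ^ 'n::finite) set"
  assumes "vec.subspace A" "B \<subseteq> A" "C \<subseteq> A"
  shows "ssum B C \<subseteq> A"
proof
  fix v assume "v \<in> ssum B C"
  then obtain b c where "v = b + c" "b \<in> B" "c \<in> C" unfolding ssum_def by auto
  then show "v \<in> A" using vec.subspace_add[OF assms(1), of b c] assms(2,3) by auto
qed

lemma split_join:
  fixes A B X1 X2 :: "('k::field ^ 'n::finite) set"
  assumes sA: "vec.subspace A" and sB: "vec.subspace B" and s1: "vec.subspace X1" and s2: "vec.subspace X2"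
    and hA: "A = ssum (A \<inter> X1) (A \<inter> X2)" and hB: "B = ssum (B \<inter> X1) (B \<inter> X2)"
  shows "ssum A B = ssum (ssum A B \<inter> X1) (ssum A B \<inter> X2)"
proof
  have sJ: "vec.subspace (ssum A B)" by (rule ssum_subspace[OF sA sB])
  show "ssum (ssum A B \<inter> X1) (ssum A B \<inter> X2) \<subseteq> ssum A B"
    by (rule ssum_le[OF sJ]) auto
  show "ssum A B \<subseteq> ssum (ssum A B \<inter> X1) (ssum A B \<inter> X2)"
  proof
    fix v assume "v \<in> ssum A B"
    then obtain a b where v: "v = a + b" "a \<in> A" "b \<in> B" unfolding ssum_def by auto
    have "a \<in> ssum (A \<inter> X1) (A \<inter> X2)" by (subst hA[symmetric]) (rule v(2))
    then obtain a1 a2 where a: "a = a1 + a2" "a1 \<in> A \<inter> X1" "a2 \<in> A \<inter> X2"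
      unfolding ssum_def by auto
    have "b \<in> ssum (B \<inter> X1) (B \<inter> X2)" by (subst hB[symmetric]) (rule v(3))
    then obtain b1 b2 where b: "b = b1 + b2" "b1 \<in> B \<inter> X1" "b2 \<in> B \<inter> X2"
      unfolding ssum_def by auto
    have "a1 + b1 \<in> ssum A B" using a b unfolding ssum_def by auto
    moreover have "a1 + b1 \<in> X1" using vec.subspace_add[OF s1, of a1 b1] a b by auto
    moreover have "a2 + b2 \<in> ssum A B" using a b unfolding ssum_def by auto
    moreover have "a2 + b2 \<in> X2" using vec.subspace_add[OF s2, of a2 b2] a b by auto
    moreover have "v = (a1 + b1) + (a2 + b2)" using v a b by (simp add: algebra_simps)
    ultimately show "v \<in> ssum (ssum A B \<inter> X1) (ssum A B \<inter> X2)" unfolding ssum_def by blast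
  qed
qed

lemma split_meet:
  fixes A B X1 X2 :: "('k::field ^ 'n::finite) set"
  assumes sA: "vec.subspace A" and sB: "vec.subspace B" and s1: "vec.subspace X1" and s2: "vec.subspace X2"
    and d: "X1 \<inter> X2 = {0}"
    and hA: "A = ssum (A \<inter> X1) (A \<inter> X2)" and hB: "B = ssum (B \<inter> X1) (B \<inter> X2)"
  shows "A \<inter> B = ssum (A \<inter> B \<inter> X1) (A \<inter> B \<inter> X2)"
proof
  have sM: "vec.subspace (A \<inter> B)" by (rule vec.subspace_inter[OF sA sB])
  show "ssum (A \<inter> B \<inter> X1) (A \<inter> B \<inter> X2) \<subseteq> A \<inter> B"
    by (rule ssum_le[OF sM]) auto
  show "A \<inter> B \<subseteq> ssum (A \<inter> B \<inter> X1) (A \<inter> B \<inter> X2)"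
  proof
    fix v assume v: "v \<in> A \<inter> B"
    have "v \<in> ssum (A \<inter> X1) (A \<inter> X2)" by (subst hA[symmetric]) (use v in simp)
    then obtain a1 a2 where a: "v = a1 + a2" "a1 \<in> A \<inter> X1" "a2 \<in> A \<inter> X2"
      unfolding ssum_def by auto
    have "v \<in> ssum (B \<inter> X1) (B \<inter> X2)" by (subst hB[symmetric]) (use v in simp)
    then obtain b1 b2 where b: "v = b1 + b2" "b1 \<in> B \<inter> X1" "b2 \<in> B \<inter> X2"
      unfolding ssum_def by auto
    have e: "a1 - b1 = b2 - a2" using a(1) b(1) by (simp add: algebra_simps)
    have "a1 - b1 \<in> X1" using vec.subspace_diff[OF s1, of a1 b1] a b by auto
    moreover have "b2 - a2 \<in> X2" using vec.subspace_diff[OF s2, of b2 a2] a b by auto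
    ultimately have "a1 - b1 \<in> X1 \<inter> X2" using e by simp
    then have "a1 = b1" using d by simp
    moreover have "a2 = b2" using a(1) b(1) calculation by simp
    ultimately show "v \<in> ssum (A \<inter> B \<inter> X1) (A \<inter> B \<inter> X2)"
      using a b unfolding ssum_def by blast
  qed
qed

lemma split_all:
  fixes X1 X2 :: "('k::field ^ 'n::finite) set"
  assumes rep: "is_rep rx ry" and s1: "vec.subspace X1" and s2: "vec.subspace X2"
    and d: "X1 \<inter> X2 = {0}" and u: "ssum X1 X2 = UNIV"
    and gx: "\<And>i. rx i = ssum (rx i \<inter> X1) (rx i \<inter> X2)"
    and gy: "\<And>i. ry i = ssum (ry i \<inter> X1) (ry i \<inter> X2)"
  shows "vec.subspace (reval rx ry a) \<and> reval rx ry a = ssum (reval rx ry a \<inter> X1) (reval rx ry a \<inter> X2)"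
proof (induction a)
  case (Gx i) then show ?case using rep gx unfolding is_rep_def by simp
next
  case (Gy i) then show ?case using rep gy unfolding is_rep_def by simp
next
  case (Join a b)
  then have "vec.subspace (reval rx ry a)" "vec.subspace (reval rx ry b)"
    "reval rx ry a = ssum (reval rx ry a \<inter> X1) (reval rx ry a \<inter> X2)"
    "reval rx ry b = ssum (reval rx ry b \<inter> X1) (reval rx ry b \<inter> X2)" by auto
  then show ?case using split_join[OF _ _ s1 s2] ssum_subspace by simp
next
  case (Meet a b)
  then have "vec.subspace (reval rx ry a)" "vec.subspace (reval rx ry b)"
    "reval rx ry a = ssum (reval rx ry a \<inter> X1) (reval rx ry a \<inter> X2)"
    "reval rx ry b = ssum (reval rx ry b \<inter> X1) (reval rx ry b \<inter> X2)" by auto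
  then show ?case using split_meet[OF _ _ s1 s2 d] vec.subspace_inter by simp
next
  case Top
  then show ?case using u vec.subspace_UNIV by simp
qed

lemma gen_in:
  fixes g X1 X2 :: "('k::field ^ 'n::finite) set"
  assumes "g \<subseteq> X1" "X1 \<inter> X2 = {0}" "0 \<in> g"
  shows "g = ssum (g \<inter> X1) (g \<inter> X2)"
proof
  show "g \<subseteq> ssum (g \<inter> X1) (g \<inter> X2)"
    using ssum_left[of "g \<inter> X2" "g \<inter> X1"] assms by auto
  have "g \<inter> X2 \<subseteq> {0}" using assms by auto
  then show "ssum (g \<inter> X1) (g \<inter> X2) \<subseteq> g" unfolding ssum_def by auto
qed

lemma not_indec:
  fixes S :: "('k::field ^ 'n::finite) set"
  assumes rep: "is_rep rx ry" and sS: "vec.subspace S"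
    and hx: "\<And>i. rx i \<subseteq> S" and h1: "ry I1 \<subseteq> S" and h2: "ry I2 \<subseteq> S"
    and nz: "S \<noteq> {0}" and nu: "S \<noteq> UNIV"
  shows "\<not> indecomposable rx ry"
proof
  assume ind: "indecomposable rx ry"
  have sG: "vec.subspace (ry I3)" using rep unfolding is_rep_def by simp
  obtain X2 where X2: "vec.subspace X2" "X2 \<noteq> {0}" "S \<inter> X2 = {0}" "ssum S X2 = UNIV"
    "ry I3 \<subseteq> ssum (ry I3 \<inter> S) (ry I3 \<inter> X2)"
    using compl_exists[OF sS sG nu] by blast
  have z: "\<And>i. 0 \<in> rx i" "\<And>i. 0 \<in> ry i"
    using rep vec.subspace_0 unfolding is_rep_def by auto
  have gx: "\<And>i. rx i = ssum (rx i \<inter> S) (rx i \<inter> X2)"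
    by (rule gen_in[OF hx X2(3) z(1)])
  have gy: "ry i = ssum (ry i \<inter> S) (ry i \<inter> X2)" for i
  proof (cases i)
    case I1 then show ?thesis using gen_in[OF h1 X2(3) z(2)] by simp
  next
    case I2 then show ?thesis using gen_in[OF h2 X2(3) z(2)] by simp
  next
    case I3
    have "ssum (ry I3 \<inter> S) (ry I3 \<inter> X2) \<subseteq> ry I3"
      by (rule ssum_le[OF sG]) auto
    then show ?thesis using X2(5) I3 by auto
  qed
  have "\<forall>a. reval rx ry a = ssum (reval rx ry a \<inter> S) (reval rx ry a \<inter> X2)"
    using split_all[OF rep sS X2(1) X2(3) X2(4) gx gy] by blast
  then show False using ind sS X2 nz unfolding indecomposable_def by blast
qed

theorem mainTheorem13:
  shows "perfect TYPE('k::field) TYPE('n::finite) (Join (Join (Gy I1) (Gy I2)) (Gx I3))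
       \<and> perfect TYPE('k::field) TYPE('n::finite) (Join (Join (Gy I1) (Gy I2)) (Gy I3))"
proof -
  have main: "reval rx ry (Join (Join (Gy I1) (Gy I2)) g) = {0} \<or> reval rx ry (Join (Join (Gy I1) (Gy I2)) g) = UNIV"
    if ind: "indecomposable rx ry" and gsub: "rx I3 \<subseteq> reval rx ry g"
      and gs: "vec.subspace (reval rx ry g)"
    for rx ry :: "idx \<Rightarrow> ('k::field ^ 'n::finite) set" and g
  proof (rule ccontr)
    assume c: "\<not> (reval rx ry (Join (Join (Gy I1) (Gy I2)) g) = {0} \<or> reval rx ry (Join (Join (Gy I1) (Gy I2)) g) = UNIV)"
    have rep: "is_rep rx ry" using ind unfolding indecomposable_def by simp
    have s: "\<And>i. vec.subspace (rx i)" "\<And>i. vec.subspace (ry i)" "\<And>i. rx i \<subseteq> ry i"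
      using rep unfolding is_rep_def by auto
    define S where "S = ssum (ssum (ry I1) (ry I2)) (reval rx ry g)"
    have S: "reval rx ry (Join (Join (Gy I1) (Gy I2)) g) = S" unfolding S_def by simp
    have s12: "vec.subspace (ssum (ry I1) (ry I2))" by (rule ssum_subspace[OF s(2) s(2)])
    have sS: "vec.subspace S" unfolding S_def by (rule ssum_subspace[OF s12 gs])
    have z12: "0 \<in> ssum (ry I1) (ry I2)" using vec.subspace_0[OF s12] .
    have zg: "0 \<in> reval rx ry g" using vec.subspace_0[OF gs] .
    have z1: "0 \<in> ry I1" "0 \<in> ry I2" using vec.subspace_0[OF s(2)] by auto
    have a12: "ssum (ry I1) (ry I2) \<subseteq> S" unfolding S_def using ssum_left[OF zg] .
    have a1: "ry I1 \<subseteq> S" using ssum_left[OF z1(2), of "ry I1"] a12 by auto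
    have a2: "ry I2 \<subseteq> S" using ssum_right[OF z1(1), of "ry I2"] a12 by auto
    have ag: "reval rx ry g \<subseteq> S" unfolding S_def using ssum_right[OF z12] .
    have hx: "rx i \<subseteq> S" for i
    proof (cases i)
      case I1 then show ?thesis using s(3)[of I1] a1 by auto
    next
      case I2 then show ?thesis using s(3)[of I2] a2 by auto
    next
      case I3 then show ?thesis using gsub ag by auto
    qed
    show False using not_indec[OF rep sS hx a1 a2] c S ind by auto
  qed
  show ?thesis
    unfolding perfect_def
  proof (intro conjI allI impI)
    fix rx ry :: "idx \<Rightarrow> ('k::field ^ 'n::finite) set"
    assume ind: "indecomposable rx ry"
    have s: "\<And>i. vec.subspace (rx i)" "\<And>i. vec.subspace (ry i)" "\<And>i. rx i \<subseteq> ry i"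
      using ind unfolding indecomposable_def is_rep_def by auto
    show "reval rx ry (Join (Join (Gy I1) (Gy I2)) (Gx I3)) = {0} \<or>
          reval rx ry (Join (Join (Gy I1) (Gy I2)) (Gx I3)) = UNIV"
      by (rule main[OF ind]) (simp_all add: s)
    show "reval rx ry (Join (Join (Gy I1) (Gy I2)) (Gy I3)) = {0} \<or>
          reval rx ry (Join (Join (Gy I1) (Gy I2)) (Gy I3)) = UNIV"
      by (rule main[OF ind]) (simp_all add: s)
  qed
qed

end
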